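(* Let $U\subset\mathbb{R}^2$ be open and let $f(u,v)=(x(u,v),y(u,v),z(u,v))$ be a non-degenerate $d$-minimal immersion $U\to\mathbb{R}^{0,2,1}$ such that $(u,v)$ are isothermal coordinates. Put $w=u+iv$ and $$\varphi_1=x_u-ix_v,\quad \varphi_2=y_u-iy_v,\quad \varphi_3=z_u-iz_v. \qquad(\ast)$$ Then $\varphi_1,\varphi_2,\varphi_3$ are holomorphic in $w$ and satisfy $$|\varphi_1|^2+|\varphi_2|^2>0,\qquad \varphi_1^2+\varphi_2^2=0. \qquad(\ast\ast)$$ Moreover $(f_u,f_u)=(f_v,f_v)=\frac12(|\varphi_1|^2+|\varphi_2|^2)$. Conversely, let $U\subset\mathbb{C}$ be a simply connected domain and $\varphi_1,\varphi_2,\varphi_3$ holomorphic functions on $U$ satisfying $(\ast\ast)$. Then, fixing $w_0\in U$, the map $f(u,v)=\mathrm{Re}\int_{w_0}^{w}(\varphi_1,\varphi_2,\varphi_3)\,dw$ (with $w=u+iv$) is a well-defined non-degenerate $d$-minimal immersion $U\to\mathbb{R}^{0,2,1}$ satisfying $(\ast)$, and $(u,v)$ are isothermal coordinates for it.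
   Context: $\mathbb{R}^{0,2,1}$ denotes $\mathbb{R}^3$ with coordinates $(x,y,z)$ and the degenerate form $(\cdot,\cdot)=dx^2+dy^2$. A non-degenerate immersion is a $C^\infty$ immersion $f$ of a 2-manifold into $\mathbb{R}^{0,2,1}$ whose induced metric $g=f^*(\cdot,\cdot)$ is positive definite. Let $\xi=(0,0,1)$ and let $d$ be the standard flat connection of $\mathbb{R}^3$. Writing $d_X(df(Y))=df(\nabla_XY)+h(X,Y)\xi$, with $\nabla$ the Levi-Civita connection of $g$, defines the second fundamental form $h$. $f$ is $d$-minimal if $\mathrm{tr}_gh\equiv0$. Coordinates $(u,v)$ are isothermal if $(f_u,f_u)=(f_v,f_v)$ and $(f_u,f_v)=0$. *)

theory Defs
  imports "HOL-Complex_Analysis.Complex_Analysis"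
begin

text \<open>We identify the parameter plane R^2 with C via w = u + i v.
  Coordinate direction 0 is u (direction 1), coordinate direction 1 is v (direction i).\<close>

definition dir :: "nat \<Rightarrow> complex" where
  "dir k = (if k = 0 then 1 else \<i>)"

definition pd :: "nat \<Rightarrow> (complex \<Rightarrow> 'a::real_normed_vector) \<Rightarrow> complex \<Rightarrow> 'a" where
  "pd k F w = vector_derivative (\<lambda>t::real. F (w + t *\<^sub>R dir k)) (at 0)"

fun iter_pd :: "nat list \<Rightarrow> (complex \<Rightarrow> 'a::real_normed_vector) \<Rightarrow> complex \<Rightarrow> 'a" where
  "iter_pd [] F = F"
| "iter_pd (k # ks) F = pd k (iter_pd ks F)"

definition smooth_on :: "complex set \<Rightarrow> (complex \<Rightarrow> 'a::real_normed_vector) \<Rightarrow> bool" where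
  "smooth_on U F \<longleftrightarrow> (\<forall>ks. set ks \<subseteq> {0,1} \<longrightarrow>
      iter_pd ks F differentiable_on U \<and> continuous_on U (iter_pd ks F))"

text \<open>The degenerate form dx^2 + dy^2 of R^{0,2,1} and the vector xi = (0,0,1).\<close>
definition dform :: "real^3 \<Rightarrow> real^3 \<Rightarrow> real" where
  "dform a b = a$1 * b$1 + a$2 * b$2"

definition xi :: "real^3" where
  "xi = axis 3 1"

definition gmet :: "(complex \<Rightarrow> real^3) \<Rightarrow> nat \<Rightarrow> nat \<Rightarrow> complex \<Rightarrow> real" where
  "gmet f i j w = dform (pd i f w) (pd j f w)"

definition gdet :: "(complex \<Rightarrow> real^3) \<Rightarrow> complex \<Rightarrow> real" where
  "gdet f w = gmet f 0 0 w * gmet f 1 1 w - gmet f 0 1 w * gmet f 1 0 w"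

definition ginv :: "(complex \<Rightarrow> real^3) \<Rightarrow> nat \<Rightarrow> nat \<Rightarrow> complex \<Rightarrow> real" where
  "ginv f i j w =
     (if i = 0 \<and> j = 0 then gmet f 1 1 w
      else if i = 1 \<and> j = 1 then gmet f 0 0 w
      else - gmet f i j w) / gdet f w"

definition christoffel :: "(complex \<Rightarrow> real^3) \<Rightarrow> nat \<Rightarrow> nat \<Rightarrow> nat \<Rightarrow> complex \<Rightarrow> real" where
  "christoffel f k i j w = (1/2) * (\<Sum>l<2. ginv f k l w *
      (pd i (gmet f j l) w + pd j (gmet f i l) w - pd l (gmet f i j) w))"

definition immersion :: "complex set \<Rightarrow> (complex \<Rightarrow> real^3) \<Rightarrow> bool" where
  "immersion U f \<longleftrightarrow> smooth_on U f \<and>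
     (\<forall>w\<in>U. \<forall>a b::real. a *\<^sub>R pd 0 f w + b *\<^sub>R pd 1 f w = 0 \<longrightarrow> a = 0 \<and> b = 0)"

definition nondeg_immersion :: "complex set \<Rightarrow> (complex \<Rightarrow> real^3) \<Rightarrow> bool" where
  "nondeg_immersion U f \<longleftrightarrow> immersion U f \<and>
     (\<forall>w\<in>U. \<forall>a b::real. (a, b) \<noteq> (0, 0) \<longrightarrow>
        dform (a *\<^sub>R pd 0 f w + b *\<^sub>R pd 1 f w) (a *\<^sub>R pd 0 f w + b *\<^sub>R pd 1 f w) > 0)"

text \<open>d-minimal: the second fundamental form h, defined by
  d_X(df(Y)) = df(nabla_X Y) + h(X,Y) xi, has vanishing g-trace.\<close>
definition d_minimal :: "complex set \<Rightarrow> (complex \<Rightarrow> real^3) \<Rightarrow> bool" where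
  "d_minimal U f \<longleftrightarrow> (\<exists>h :: nat \<Rightarrow> nat \<Rightarrow> complex \<Rightarrow> real.
     (\<forall>w\<in>U. \<forall>i<2. \<forall>j<2.
        pd i (pd j f) w = (\<Sum>k<2. christoffel f k i j w *\<^sub>R pd k f w) + h i j w *\<^sub>R xi) \<and>
     (\<forall>w\<in>U. (\<Sum>i<2. \<Sum>j<2. ginv f i j w * h i j w) = 0))"

definition isothermal :: "complex set \<Rightarrow> (complex \<Rightarrow> real^3) \<Rightarrow> bool" where
  "isothermal U f \<longleftrightarrow> (\<forall>w\<in>U. gmet f 0 0 w = gmet f 1 1 w \<and> gmet f 0 1 w = 0)"

definition phi :: "(complex \<Rightarrow> real^3) \<Rightarrow> 3 \<Rightarrow> complex \<Rightarrow> complex" where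
  "phi f k w = Complex (pd 0 (\<lambda>z. f z $ k) w) (- pd 1 (\<lambda>z. f z $ k) w)"

end

theory Submission imports Defs begin

lemma line_deriv:
  assumes "(F has_derivative F') (at (q + s *\<^sub>R d))"
  shows "((\<lambda>t::real. F (q + t *\<^sub>R d)) has_vector_derivative F' d) (at s)"
proof -
  have l: "linear F'" using assms has_derivative_linear by blast
  have "((\<lambda>t::real. q + t *\<^sub>R d) has_derivative (\<lambda>t. t *\<^sub>R d)) (at s)"
    by (auto intro!: derivative_eq_intros)
  from diff_chain_at[OF this assms]
  have "((\<lambda>t. F (q + t *\<^sub>R d)) has_derivative (\<lambda>t. F' (t *\<^sub>R d))) (at s)"
    by (simp add: o_def)
  then show ?thesis unfolding has_vector_derivative_def
    using l by (simp add: linear_scale)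
qed

lemma pd_hasderiv:
  assumes "(F has_derivative F') (at w)"
  shows "pd k F w = F' (dir k)"
  unfolding pd_def
  by (rule vector_derivative_at, rule line_deriv) (use assms in simp)

lemma pd_differentiable:
  assumes "F differentiable (at w)"
  shows "\<exists>F'. (F has_derivative F') (at w) \<and> pd k F w = F' (dir k)"
  using assms pd_hasderiv unfolding differentiable_def by blast

lemma lin_decomp:
  assumes "linear (L :: complex \<Rightarrow> 'a::real_vector)"
  shows "L h = Re h *\<^sub>R L 1 + Im h *\<^sub>R L \<i>"
proof -
  have e: "Re h *\<^sub>R 1 + Im h *\<^sub>R \<i> = h" by (simp add: complex_eq_iff)
  have "L (Re h *\<^sub>R 1 + Im h *\<^sub>R \<i>) = Re h *\<^sub>R L 1 + Im h *\<^sub>R L \<i>"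
    using assms by (simp add: linear_add linear_scale)
  then show ?thesis unfolding e .
qed

lemma deriv_decomp:
  assumes "(F has_derivative F') (at w)"
  shows "F' h = Re h *\<^sub>R pd 0 F w + Im h *\<^sub>R pd 1 F w"
proof -
  have a: "F' h = Re h *\<^sub>R F' 1 + Im h *\<^sub>R F' \<i>"
    by (rule lin_decomp[OF has_derivative_linear[OF assms]])
  have b: "pd 0 F w = F' 1" "pd 1 F w = F' \<i>"
    using pd_hasderiv[OF assms, of 0] pd_hasderiv[OF assms, of 1] by (simp_all add: dir_def)
  show ?thesis unfolding b by (rule a)
qed

lemma pd_cong:
  assumes "open U" "w \<in> U" "\<And>z. z \<in> U \<Longrightarrow> F z = G z"
  shows "pd k F w = pd k G w"
proof -
  have "eventually (\<lambda>t::real. t \<in> UNIV \<longrightarrow> F (w + t *\<^sub>R dir k) = G (w + t *\<^sub>R dir k)) (nhds 0)"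
  proof -
    have "continuous_on UNIV (\<lambda>t::real. w + t *\<^sub>R dir k)" by (intro continuous_intros)
    then have "open {t::real. w + t *\<^sub>R dir k \<in> U}"
      using open_vimage[OF assms(1)] by (simp add: vimage_def)
    moreover have "(0::real) \<in> {t. w + t *\<^sub>R dir k \<in> U}" using assms by simp
    ultimately show ?thesis using assms(3) by (auto simp: eventually_nhds)
  qed
  then show ?thesis unfolding pd_def
    by (intro vector_derivative_cong_eq) auto
qed

lemma pd_component:
  assumes "(F has_derivative F') (at w)"
  shows "pd k (\<lambda>z. F z $ c) w = pd k F w $ c"
proof -
  have "((\<lambda>z. F z $ c) has_derivative (\<lambda>h. F' h $ c)) (at w)"
    using bounded_linear.has_derivative[OF bounded_linear_vec_nth assms] .
  then show ?thesis using pd_hasderiv assms by metis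
qed

lemma pd_Re_holo:
  assumes "(G has_field_derivative G') (at w)"
  shows "pd k (\<lambda>z. Re (G z)) w = Re (dir k * G')"
proof -
  have "((\<lambda>z. Re (G z)) has_derivative (\<lambda>h. Re (G' * h))) (at w)"
    using bounded_linear.has_derivative[OF bounded_linear_Re assms[unfolded has_field_derivative_def]] .
  from pd_hasderiv[OF this] show ?thesis by (simp add: mult.commute)
qed


lemma norm_dir[simp]: "norm (dir k) = 1"
  by (simp add: dir_def)

lemma line_pd:
  fixes F :: "complex \<Rightarrow> real"
  assumes "F differentiable (at (q + s *\<^sub>R dir k))"
  shows "((\<lambda>t. F (q + t *\<^sub>R dir k)) has_real_derivative pd k F (q + s *\<^sub>R dir k)) (at s)"
proof -
  obtain F' where F': "(F has_derivative F') (at (q + s *\<^sub>R dir k))"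
    using assms unfolding differentiable_def by blast
  show ?thesis
    unfolding has_real_derivative_iff_has_vector_derivative pd_hasderiv[OF F']
    by (rule line_deriv[OF F'])
qed

lemma schwarz_half:
  fixes F :: "complex \<Rightarrow> real"
  assumes U: "open U" "w \<in> U" "\<forall>z\<in>U. F differentiable (at z)"
    and P: "pd a F differentiable (at w)" and e: "e > 0"
  shows "\<exists>\<delta>>0. \<forall>h. 0 < h \<and> h < \<delta> \<longrightarrow>
    \<bar>(F (w + h *\<^sub>R dir a + h *\<^sub>R dir b) - F (w + h *\<^sub>R dir a) - F (w + h *\<^sub>R dir b) + F w)
      - h\<^sup>2 * pd b (pd a F) w\<bar> \<le> 3 * e * h\<^sup>2"
proof -
  obtain P' where P': "(pd a F has_derivative P') (at w)"
    using P unfolding differentiable_def by blast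
  have lin: "linear P'" using P' has_derivative_linear by blast
  have Pb: "pd b (pd a F) w = P' (dir b)" using pd_hasderiv[OF P'] .
  obtain d0 where d0: "d0 > 0" "\<forall>y. norm (y - w) < d0 \<longrightarrow>
      norm (pd a F y - pd a F w - P' (y - w)) \<le> e * norm (y - w)"
    using P' e unfolding has_derivative_at_alt by blast
  obtain r where r: "r > 0" "ball w r \<subseteq> U" using U openE by blast
  define \<delta> where "\<delta> = min (d0/2) (r/2)"
  have "\<delta> > 0" using d0 r by (simp add: \<delta>_def)
  moreover have "\<bar>(F (w + h *\<^sub>R dir a + h *\<^sub>R dir b) - F (w + h *\<^sub>R dir a) - F (w + h *\<^sub>R dir b) + F w)
      - h\<^sup>2 * pd b (pd a F) w\<bar> \<le> 3 * e * h\<^sup>2" if h: "0 < h" "h < \<delta>" for h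
  proof -
    define g where "g t = F (w + h *\<^sub>R dir b + t *\<^sub>R dir a) - F (w + t *\<^sub>R dir a)" for t
    have inU: "w + p \<in> U" if "norm p < r" for p
      using r that by (auto simp: dist_norm)
    have der: "(g has_real_derivative
        (pd a F (w + h *\<^sub>R dir b + t *\<^sub>R dir a) - pd a F (w + t *\<^sub>R dir a))) (at t)"
      if t: "0 \<le> t" "t \<le> h" for t
    proof -
      have n1: "norm (h *\<^sub>R dir b + t *\<^sub>R dir a) < r"
      proof -
        have "norm (h *\<^sub>R dir b + t *\<^sub>R dir a) \<le> norm (h *\<^sub>R dir b) + norm (t *\<^sub>R dir a)"
          by (rule norm_triangle_ineq)
        also have "\<dots> = h + t" using t h by simp
        finally show ?thesis using t h by (simp add: \<delta>_def)
      qed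
      have n2: "norm (t *\<^sub>R dir a) < r" using t h by (simp add: \<delta>_def)
      have d1: "F differentiable (at (w + h *\<^sub>R dir b + t *\<^sub>R dir a))"
        using U(3) inU[OF n1] by (simp add: add.assoc)
      have d2: "F differentiable (at (w + t *\<^sub>R dir a))"
        using U(3) inU[OF n2] by simp
      show ?thesis unfolding g_def
        by (intro DERIV_diff line_pd d1 d2)
    qed
    obtain \<theta> where th: "0 < \<theta>" "\<theta> < h"
      "g h - g 0 = (h - 0) * (pd a F (w + h *\<^sub>R dir b + \<theta> *\<^sub>R dir a) - pd a F (w + \<theta> *\<^sub>R dir a))"
      using MVT2[of 0 h g, OF h(1) der] by auto
    have gd: "g h - g 0 = F (w + h *\<^sub>R dir a + h *\<^sub>R dir b) - F (w + h *\<^sub>R dir a) - F (w + h *\<^sub>R dir b) + F w"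
      by (simp add: g_def algebra_simps)
    define y1 where "y1 = w + h *\<^sub>R dir b + \<theta> *\<^sub>R dir a"
    define y2 where "y2 = w + \<theta> *\<^sub>R dir a"
    have ny1: "norm (y1 - w) \<le> h + \<theta>"
    proof -
      have "norm (y1 - w) = norm (h *\<^sub>R dir b + \<theta> *\<^sub>R dir a)" by (simp add: y1_def)
      also have "\<dots> \<le> norm (h *\<^sub>R dir b) + norm (\<theta> *\<^sub>R dir a)" by (rule norm_triangle_ineq)
      also have "\<dots> = h + \<theta>" using th h by simp
      finally show ?thesis .
    qed
    have ny2: "norm (y2 - w) = \<theta>" using th by (simp add: y2_def)
    have r1: "norm (pd a F y1 - pd a F w - P' (y1 - w)) \<le> e * norm (y1 - w)"
      using d0(2) ny1 th h by (simp add: \<delta>_def)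
    have r2: "norm (pd a F y2 - pd a F w - P' (y2 - w)) \<le> e * norm (y2 - w)"
      using d0(2)[rule_format, of y2] ny2 th h by (simp add: \<delta>_def)
    have lin1: "P' (y1 - w) - P' (y2 - w) = h * P' (dir b)"
    proof -
      have "P' (y1 - w) - P' (y2 - w) = P' ((y1 - w) - (y2 - w))" using lin by (simp add: linear_diff)
      also have "(y1 - w) - (y2 - w) = h *\<^sub>R dir b" by (simp add: y1_def y2_def)
      also have "P' (h *\<^sub>R dir b) = h * P' (dir b)" using lin by (simp add: linear_scale)
      finally show ?thesis .
    qed
    have "\<bar>pd a F y1 - pd a F y2 - h * P' (dir b)\<bar> \<le> e * norm (y1 - w) + e * norm (y2 - w)"
      using r1 r2 lin1 by simp
    also have "\<dots> \<le> e * (h + \<theta>) + e * \<theta>"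
      using ny1 ny2 e by (intro add_mono mult_left_mono) auto
    also have "\<dots> \<le> 3 * e * h" using th e by (simp add: algebra_simps)
    finally have bnd: "\<bar>pd a F y1 - pd a F y2 - h * P' (dir b)\<bar> \<le> 3 * e * h" .
    have "(g h - g 0) - h\<^sup>2 * P' (dir b) = h * (pd a F y1 - pd a F y2 - h * P' (dir b))"
      using th(3) by (simp add: y1_def y2_def power2_eq_square algebra_simps)
    then have "\<bar>(g h - g 0) - h\<^sup>2 * P' (dir b)\<bar> = h * \<bar>pd a F y1 - pd a F y2 - h * P' (dir b)\<bar>"
      using h by (simp add: abs_mult)
    also have "\<dots> \<le> h * (3 * e * h)" using bnd h by (intro mult_left_mono) auto
    also have "\<dots> = 3 * e * h\<^sup>2" by (simp add: power2_eq_square)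
    finally show ?thesis unfolding gd Pb .
  qed
  ultimately show ?thesis by blast
qed

lemma schwarz:
  fixes F :: "complex \<Rightarrow> real"
  assumes U: "open U" "w \<in> U" "\<forall>z\<in>U. F differentiable (at z)"
    and P0: "pd 0 F differentiable (at w)" and P1: "pd 1 F differentiable (at w)"
  shows "pd 1 (pd 0 F) w = pd 0 (pd 1 F) w"
proof (rule ccontr)
  let ?A = "pd 1 (pd 0 F) w" and ?B = "pd 0 (pd 1 F) w"
  assume ne: "?A \<noteq> ?B"
  define e where "e = \<bar>?A - ?B\<bar> / 12"
  have e: "e > 0" using ne by (simp add: e_def)
  obtain d1 where d1: "d1 > 0" "\<forall>h. 0 < h \<and> h < d1 \<longrightarrow>
    \<bar>(F (w + h *\<^sub>R dir 0 + h *\<^sub>R dir 1) - F (w + h *\<^sub>R dir 0) - F (w + h *\<^sub>R dir 1) + F w)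
      - h\<^sup>2 * ?A\<bar> \<le> 3 * e * h\<^sup>2"
    using schwarz_half[OF U P0 e, of 1] by blast
  obtain d2 where d2: "d2 > 0" "\<forall>h. 0 < h \<and> h < d2 \<longrightarrow>
    \<bar>(F (w + h *\<^sub>R dir 1 + h *\<^sub>R dir 0) - F (w + h *\<^sub>R dir 1) - F (w + h *\<^sub>R dir 0) + F w)
      - h\<^sup>2 * ?B\<bar> \<le> 3 * e * h\<^sup>2"
    using schwarz_half[OF U P1 e, of 0] by blast
  define h where "h = min d1 d2 / 2"
  have h: "0 < h" "h < d1" "h < d2" using d1 d2 by (auto simp: h_def)
  have sw: "w + h *\<^sub>R dir 1 + h *\<^sub>R dir 0 = w + h *\<^sub>R dir 0 + h *\<^sub>R dir 1" by (simp add: algebra_simps)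
  have "\<bar>h\<^sup>2 * ?A - h\<^sup>2 * ?B\<bar> \<le> 6 * e * h\<^sup>2"
    using d1(2)[rule_format, OF conjI[OF h(1) h(2)]] d2(2)[rule_format, OF conjI[OF h(1) h(3)]]
    unfolding sw by linarith
  moreover have "\<bar>h\<^sup>2 * ?A - h\<^sup>2 * ?B\<bar> = h\<^sup>2 * \<bar>?A - ?B\<bar>" by (simp add: abs_mult flip: right_diff_distrib)
  ultimately have "h\<^sup>2 * \<bar>?A - ?B\<bar> \<le> h\<^sup>2 * (6 * e)" by (simp add: mult.assoc mult.commute)
  then have "\<bar>?A - ?B\<bar> \<le> 6 * e" using h by simp
  then show False using e by (simp add: e_def)
qed


lemma pd_const: "pd k (\<lambda>z. c) w = 0"
  using pd_hasderiv[OF has_derivative_const[of c "at w"]] by simp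

lemma gmet_sym: "gmet f 1 0 = gmet f 0 1"
  by (rule ext) (simp add: gmet_def dform_def mult.commute)

lemma sum2: "(\<Sum>l<(2::nat). X l) = X 0 + X 1"
  by (simp add: numeral_2_eq_2)

lemma chris:
  assumes U: "open U" "w \<in> U" and iso: "isothermal U f" and pos: "gmet f 0 0 w > 0"
  defines "lam \<equiv> gmet f 0 0 w" and "L0 \<equiv> pd 0 (gmet f 0 0) w" and "L1 \<equiv> pd 1 (gmet f 0 0) w"
  shows "ginv f 0 0 w = 1/lam" "ginv f 1 1 w = 1/lam" "ginv f 0 1 w = 0" "ginv f 1 0 w = 0"
   "christoffel f 0 0 0 w = L0/(2*lam)" "christoffel f 1 0 0 w = -L1/(2*lam)"
   "christoffel f 0 1 1 w = -L0/(2*lam)" "christoffel f 1 1 1 w = L1/(2*lam)"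
   "christoffel f 0 0 1 w = L1/(2*lam)" "christoffel f 0 1 0 w = L1/(2*lam)"
   "christoffel f 1 0 1 w = L0/(2*lam)" "christoffel f 1 1 0 w = L0/(2*lam)"
proof -
  have g11: "gmet f 1 1 w = lam" and g01: "gmet f 0 1 w = 0" and g10: "gmet f 1 0 w = 0"
    using iso U(2) gmet_sym unfolding isothermal_def lam_def by auto
  have det: "gdet f w = lam * lam" using g11 g01 g10 by (simp add: gdet_def lam_def)
  have lpos: "lam > 0" using pos lam_def by simp
  have p01: "pd k (gmet f 0 1) w = 0" for k
  proof -
    have "pd k (gmet f 0 1) w = pd k (\<lambda>z. 0::real) w"
      by (rule pd_cong[OF U]) (use iso in \<open>simp add: isothermal_def\<close>)
    then show ?thesis by (simp add: pd_const)
  qed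
  have p10: "pd k (gmet f 1 0) w = 0" for k using p01 gmet_sym by simp
  have p11: "pd k (gmet f 1 1) w = pd k (gmet f 0 0) w" for k
    by (rule pd_cong[OF U]) (use iso in \<open>simp add: isothermal_def\<close>)
  have gi: "ginv f 0 0 w = 1/lam" "ginv f 1 1 w = 1/lam" "ginv f 0 1 w = 0" "ginv f 1 0 w = 0"
    using g11 g01 g10 det lpos by (simp_all add: ginv_def lam_def)
  then show "ginv f 0 0 w = 1/lam" "ginv f 1 1 w = 1/lam" "ginv f 0 1 w = 0" "ginv f 1 0 w = 0" by simp_all
  note defs = christoffel_def sum2 gi p01 p10 p11 L0_def[symmetric] L1_def[symmetric]
  show "christoffel f 0 0 0 w = L0/(2*lam)" "christoffel f 1 0 0 w = -L1/(2*lam)"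
   "christoffel f 0 1 1 w = -L0/(2*lam)" "christoffel f 1 1 1 w = L1/(2*lam)"
   "christoffel f 0 0 1 w = L1/(2*lam)" "christoffel f 0 1 0 w = L1/(2*lam)"
   "christoffel f 1 0 1 w = L0/(2*lam)" "christoffel f 1 1 0 w = L0/(2*lam)"
    unfolding christoffel_def sum2 L0_def[symmetric] L1_def[symmetric]
    using gi[unfolded One_nat_def] p01[unfolded One_nat_def] p10[unfolded One_nat_def] p11[unfolded One_nat_def]
       L0_def L1_def
    by (simp_all add: One_nat_def field_simps)
qed


lemma diff_cong:
  assumes "open U" "w \<in> U" "\<And>z. z \<in> U \<Longrightarrow> F z = G z" "F differentiable (at w)"
  shows "G differentiable (at w)"
  using assms has_derivative_transform_within_open[of F _ w UNIV U G]
  unfolding differentiable_def by blast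

lemma nth_diff:
  fixes F :: "complex \<Rightarrow> real^'n"
  assumes "F differentiable (at w)"
  shows "(\<lambda>z. F z $ c) differentiable (at w)"
  using assms bounded_linear.has_derivative[OF bounded_linear_vec_nth]
  unfolding differentiable_def by blast

lemma pd_comp_on:
  fixes F :: "complex \<Rightarrow> real^'n"
  assumes "open U" "\<forall>z\<in>U. F differentiable (at z)" "z \<in> U"
  shows "pd k (\<lambda>z. F z $ c) z = pd k F z $ c"
  using assms pd_component unfolding differentiable_def by blast

lemma holo_from_CR:
  fixes P Q :: "complex \<Rightarrow> real"
  assumes P: "P differentiable (at w)" and Q: "Q differentiable (at w)"
    and cr1: "pd 0 P w = - pd 1 Q w" and cr2: "pd 1 P w = pd 0 Q w"
  shows "((\<lambda>z. Complex (P z) (- Q z)) has_field_derivative Complex (pd 0 P w) (- pd 0 Q w)) (at w)"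
proof -
  obtain P' where P': "(P has_derivative P') (at w)" using P unfolding differentiable_def by blast
  obtain Q' where Q': "(Q has_derivative Q') (at w)" using Q unfolding differentiable_def by blast
  have e: "(\<lambda>z. Complex (P z) (- Q z)) = (\<lambda>z. of_real (P z) + \<i> * of_real (- Q z))"
    by (rule ext) (simp add: complex_eq_iff)
  have d: "((\<lambda>z. of_real (P z) + \<i> * of_real (- Q z)) has_derivative
       (\<lambda>h. of_real (P' h) + \<i> * of_real (- Q' h))) (at w)"
    by (intro has_derivative_add has_derivative_mult_right has_derivative_minus
        bounded_linear.has_derivative[OF bounded_linear_of_real] P' Q')
  have "(\<lambda>h. of_real (P' h) + \<i> * of_real (- Q' h)) = (\<lambda>h. Complex (pd 0 P w) (- pd 0 Q w) * h)"
  proof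
    fix h
    show "of_real (P' h) + \<i> * of_real (- Q' h) = Complex (pd 0 P w) (- pd 0 Q w) * h"
      using deriv_decomp[OF P', of h] deriv_decomp[OF Q', of h] cr1 cr2
      by (simp add: complex_eq_iff algebra_simps)
  qed
  then show ?thesis using d unfolding e has_field_derivative_def by simp
qed


lemma part1:
  fixes f :: "complex \<Rightarrow> real^3"
  assumes U: "open U" and nd: "nondeg_immersion U f" and dm: "d_minimal U f" and iso: "isothermal U f"
  shows "phi f 1 holomorphic_on U \<and> phi f 2 holomorphic_on U \<and> phi f 3 holomorphic_on U \<and>
        (\<forall>w\<in>U. (cmod (phi f 1 w))\<^sup>2 + (cmod (phi f 2 w))\<^sup>2 > 0 \<and>
                (phi f 1 w)\<^sup>2 + (phi f 2 w)\<^sup>2 = 0) \<and>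
        (\<forall>w\<in>U. dform (pd 0 f w) (pd 0 f w) = dform (pd 1 f w) (pd 1 f w) \<and>
                dform (pd 0 f w) (pd 0 f w) = ((cmod (phi f 1 w))\<^sup>2 + (cmod (phi f 2 w))\<^sup>2) / 2)"
proof -
  have sm: "smooth_on U f" using nd unfolding nondeg_immersion_def immersion_def by blast
  have pos: "gmet f 0 0 w > 0" if "w \<in> U" for w
  proof -
    have "\<forall>a b::real. (a, b) \<noteq> (0, 0) \<longrightarrow>
        dform (a *\<^sub>R pd 0 f w + b *\<^sub>R pd 1 f w) (a *\<^sub>R pd 0 f w + b *\<^sub>R pd 1 f w) > 0"
      using nd that unfolding nondeg_immersion_def by blast
    from this[rule_format, of 1 0] show ?thesis by (simp add: gmet_def)
  qed
  have dU: "\<forall>z\<in>U. iter_pd ks f differentiable (at z)" if "set ks \<subseteq> {0,1}" for ks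
    using sm that U unfolding smooth_on_def by (simp add: differentiable_on_eq_differentiable_at)
  have df: "\<forall>z\<in>U. f differentiable (at z)" using dU[of "[]"] by simp
  have df0: "\<forall>z\<in>U. pd 0 f differentiable (at z)" using dU[of "[0]"] by simp
  have df1: "\<forall>z\<in>U. pd 1 f differentiable (at z)" using dU[of "[1]"] by simp
  obtain h where hE: "\<forall>w\<in>U. \<forall>i<2. \<forall>j<2.
        pd i (pd j f) w = (\<Sum>k<2. christoffel f k i j w *\<^sub>R pd k f w) + h i j w *\<^sub>R xi"
     and hT: "\<forall>w\<in>U. (\<Sum>i<2. \<Sum>j<2. ginv f i j w * h i j w) = 0"
    using dm unfolding d_minimal_def by blast
  have harm: "pd 0 (pd 0 f) w + pd 1 (pd 1 f) w = 0" if w: "w \<in> U" for w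
  proof -
    note C = chris[OF U w iso pos[OF w]]
    have e00: "pd 0 (pd 0 f) w = christoffel f 0 0 0 w *\<^sub>R pd 0 f w + christoffel f 1 0 0 w *\<^sub>R pd 1 f w + h 0 0 w *\<^sub>R xi"
      using hE w unfolding sum2 by auto
    have e11: "pd 1 (pd 1 f) w = christoffel f 0 1 1 w *\<^sub>R pd 0 f w + christoffel f 1 1 1 w *\<^sub>R pd 1 f w + h 1 1 w *\<^sub>R xi"
      using hE w unfolding sum2 by auto
    have "ginv f 0 0 w * h 0 0 w + ginv f 0 1 w * h 0 1 w + (ginv f 1 0 w * h 1 0 w + ginv f 1 1 w * h 1 1 w) = 0"
      using hT w unfolding sum2 by auto
    then have "h 0 0 w + h 1 1 w = 0" using C(1-4)[unfolded One_nat_def] pos[OF w]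
      by (simp add: field_simps One_nat_def)
    then show ?thesis unfolding e00 e11 C(5-8)
      by (simp add: algebra_simps flip: scaleR_add_left)
  qed
  have comp: "pd k (\<lambda>z. f z $ c) z = pd k f z $ c" if "z \<in> U" for k c z
    using pd_comp_on[OF U df that] .
  have comp2: "pd k (pd j (\<lambda>z. f z $ c)) w = pd k (pd j f) w $ c" if w: "w \<in> U" and j: "j \<in> {0,1}" for k j c w
  proof -
    have "pd k (pd j (\<lambda>z. f z $ c)) w = pd k (\<lambda>z. pd j f z $ c) w"
      by (rule pd_cong[OF U w]) (rule comp)
    also have "\<dots> = pd k (pd j f) w $ c"
      using pd_comp_on[OF U _ w] df0 df1 j by auto
    finally show ?thesis .
  qed
  have dP: "pd j (\<lambda>z. f z $ c) differentiable (at w)" if w: "w \<in> U" and j: "j \<in> {0,1}" for j c w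
  proof -
    have "(\<lambda>z. pd j f z $ c) differentiable (at w)" using nth_diff df0 df1 j w by auto
    then show ?thesis by (rule diff_cong[OF U w, rotated]) (simp add: comp)
  qed
  have holo: "phi f c holomorphic_on U" for c
  proof -
    have "\<exists>f'. (phi f c has_field_derivative f') (at w)" if w: "w \<in> U" for w
    proof -
      let ?P = "pd 0 (\<lambda>z. f z $ c)" and ?Q = "pd 1 (\<lambda>z. f z $ c)"
      have cr1: "pd 0 ?P w = - pd 1 ?Q w"
      proof -
        have "(pd 0 (pd 0 f) w + pd 1 (pd 1 f) w) $ c = 0" using harm[OF w] by simp
        have j01: "(0::nat) \<in> {0,1}" "(1::nat) \<in> {0,1}" by simp_all
        show ?thesis unfolding comp2[OF w j01(1), of 0 c] comp2[OF w j01(2), of 1 c]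
          using \<open>(pd 0 (pd 0 f) w + pd 1 (pd 1 f) w) $ c = 0\<close> by (simp add: eq_neg_iff_add_eq_0)
      qed
      have cr2: "pd 1 ?P w = pd 0 ?Q w"
        by (rule schwarz[OF U w]) (use df nth_diff dP[OF w] in auto)
      have "phi f c = (\<lambda>z. Complex (?P z) (- ?Q z))" by (rule ext) (simp add: phi_def)
      then show ?thesis using holo_from_CR[OF dP[OF w] dP[OF w] cr1 cr2] by auto
    qed
    then show ?thesis using U by (simp add: holomorphic_on_open)
  qed
  have pw: "(cmod (phi f 1 w))\<^sup>2 + (cmod (phi f 2 w))\<^sup>2 > 0 \<and> (phi f 1 w)\<^sup>2 + (phi f 2 w)\<^sup>2 = 0 \<and>
       dform (pd 0 f w) (pd 0 f w) = dform (pd 1 f w) (pd 1 f w) \<and>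
       dform (pd 0 f w) (pd 0 f w) = ((cmod (phi f 1 w))\<^sup>2 + (cmod (phi f 2 w))\<^sup>2) / 2" if w: "w \<in> U" for w
  proof -
    have ph: "phi f c w = Complex (pd 0 f w $ c) (- (pd 1 f w $ c))" for c
      by (simp add: phi_def comp[OF w])
    have g: "gmet f 0 0 w = gmet f 1 1 w" "gmet f 0 1 w = 0" using iso w unfolding isothermal_def by auto
    have p: "gmet f 0 0 w > 0" using pos[OF w] .
    define a where "a = pd 0 f w $ 1"
    define b where "b = pd 1 f w $ 1"
    define c where "c = pd 0 f w $ 2"
    define d where "d = pd 1 f w $ 2"
    have g': "a*a + c*c = b*b + d*d" "a*b + c*d = 0" "a*a + c*c > 0"
      using g p unfolding gmet_def dform_def a_def b_def c_def d_def by simp_all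
    have m: "(cmod (phi f 1 w))\<^sup>2 + (cmod (phi f 2 w))\<^sup>2 = a*a + b*b + c*c + d*d"
      unfolding ph cmod_power2 a_def b_def c_def d_def by (simp add: power2_eq_square)
    have s: "(phi f 1 w)\<^sup>2 + (phi f 2 w)\<^sup>2 = Complex ((a*a + c*c) - (b*b + d*d)) (- 2 * (a*b + c*d))"
      unfolding ph a_def b_def c_def d_def by (simp add: complex_eq_iff power2_eq_square algebra_simps)
    have "dform (pd 0 f w) (pd 0 f w) = a*a + c*c" "dform (pd 1 f w) (pd 1 f w) = b*b + d*d"
      unfolding dform_def a_def b_def c_def d_def by simp_all
    then show ?thesis unfolding m s using g' by (simp add: complex_eq_iff)
  qed
  show ?thesis using holo pw by blast
qed


lemma vec3_decomp: "(vector [a, b, c] :: real^3) = a *\<^sub>R axis 1 1 + b *\<^sub>R axis 2 1 + c *\<^sub>R axis 3 (1::real)"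
  by (simp add: vec_eq_iff forall_3 axis_def)

lemma vec_hasderiv:
  assumes "open U" "w \<in> U" "A1 holomorphic_on U" "A2 holomorphic_on U" "A3 holomorphic_on U"
  shows "((\<lambda>z. vector [Re (A1 z), Re (A2 z), Re (A3 z)] :: real^3) has_derivative
     (\<lambda>h. vector [Re (deriv A1 w * h), Re (deriv A2 w * h), Re (deriv A3 w * h)] :: real^3)) (at w)"
proof -
  have d: "((\<lambda>z. Re (A z)) has_derivative (\<lambda>h. Re (deriv A w * h))) (at w)" if "A holomorphic_on U" for A
    using bounded_linear.has_derivative[OF bounded_linear_Re
        holomorphic_derivI[OF that assms(1,2), unfolded has_field_derivative_def]] .
  show ?thesis unfolding vec3_decomp
    by (intro has_derivative_add has_derivative_scaleR_left d assms(3-5))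
qed

lemma pd_vec:
  fixes F :: "complex \<Rightarrow> real^3"
  assumes U: "open U" "w \<in> U" and F: "\<forall>z\<in>U. F z = vector [Re (A1 z), Re (A2 z), Re (A3 z)]"
    and H: "A1 holomorphic_on U" "A2 holomorphic_on U" "A3 holomorphic_on U"
  shows "pd k F w = vector [Re (dir k * deriv A1 w), Re (dir k * deriv A2 w), Re (dir k * deriv A3 w)]"
    and "F differentiable (at w)"
proof -
  have "pd k F w = pd k (\<lambda>z. vector [Re (A1 z), Re (A2 z), Re (A3 z)] :: real^3) w"
    by (rule pd_cong[OF U]) (use F in blast)
  also have "\<dots> = vector [Re (dir k * deriv A1 w), Re (dir k * deriv A2 w), Re (dir k * deriv A3 w)]"
    using pd_hasderiv[OF vec_hasderiv[OF U H]] by (simp add: mult.commute)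
  finally show "pd k F w = vector [Re (dir k * deriv A1 w), Re (dir k * deriv A2 w), Re (dir k * deriv A3 w)]" .
  have "(\<lambda>z. vector [Re (A1 z), Re (A2 z), Re (A3 z)] :: real^3) differentiable (at w)"
    using vec_hasderiv[OF U H] unfolding differentiable_def by blast
  then show "F differentiable (at w)"
    by (rule diff_cong[OF U, rotated]) (use F in auto)
qed

lemma iter_vec:
  fixes F :: "complex \<Rightarrow> real^3"
  assumes U: "open U" and F: "\<forall>z\<in>U. F z = vector [Re (A1 z), Re (A2 z), Re (A3 z)]"
    and H: "A1 holomorphic_on U" "A2 holomorphic_on U" "A3 holomorphic_on U"
  shows "\<exists>B1 B2 B3. B1 holomorphic_on U \<and> B2 holomorphic_on U \<and> B3 holomorphic_on U \<and>
     (\<forall>z\<in>U. iter_pd ks F z = vector [Re (B1 z), Re (B2 z), Re (B3 z)])"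
proof (induction ks)
  case Nil
  then show ?case using F H by auto
next
  case (Cons k ks)
  then obtain B1 B2 B3 where B: "B1 holomorphic_on U" "B2 holomorphic_on U" "B3 holomorphic_on U"
     "\<forall>z\<in>U. iter_pd ks F z = vector [Re (B1 z), Re (B2 z), Re (B3 z)]" by blast
  have hd: "(\<lambda>z. dir k * deriv B z) holomorphic_on U" if "B holomorphic_on U" for B
    by (intro holomorphic_on_mult holomorphic_on_const holomorphic_deriv that U)
  show ?case
    apply (rule exI[of _ "\<lambda>z. dir k * deriv B1 z"], rule exI[of _ "\<lambda>z. dir k * deriv B2 z"],
        rule exI[of _ "\<lambda>z. dir k * deriv B3 z"])
    using hd B pd_vec(1)[OF U _ B(4) B(1-3)] by simp
qed

lemma smooth_vec:
  fixes F :: "complex \<Rightarrow> real^3"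
  assumes U: "open U" and F: "\<forall>z\<in>U. F z = vector [Re (A1 z), Re (A2 z), Re (A3 z)]"
    and H: "A1 holomorphic_on U" "A2 holomorphic_on U" "A3 holomorphic_on U"
  shows "smooth_on U F"
  unfolding smooth_on_def
proof (intro allI impI)
  fix ks :: "nat list"
  obtain B1 B2 B3 where B: "B1 holomorphic_on U" "B2 holomorphic_on U" "B3 holomorphic_on U"
     "\<forall>z\<in>U. iter_pd ks F z = vector [Re (B1 z), Re (B2 z), Re (B3 z)]"
    using iter_vec[OF U F H] by blast
  have "iter_pd ks F differentiable_on U"
    using pd_vec(2)[OF U _ B(4) B(1-3)] U by (simp add: differentiable_on_eq_differentiable_at)
  then show "iter_pd ks F differentiable_on U \<and> continuous_on U (iter_pd ks F)"
    by (simp add: differentiable_imp_continuous_on)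
qed


lemma alg_nondeg:
 fixes x y u v a b :: real
 assumes "x * x - y * y + u * u - v * v = 0" "x * y + u * v = 0" "x * x + y * y + u * u + v * v > 0" "(a, b) \<noteq> (0, 0)"
 shows "(a * x - b * y) * (a * x - b * y) + (a * u - b * v) * (a * u - b * v) > 0"
proof -
 have e0: "(a * x - b * y) * (a * x - b * y) + (a * u - b * v) * (a * u - b * v) - (a * a + b * b) * ((x * x + y * y + u * u + v * v)/2)
    = (a * a - b * b)/2 * (x * x - y * y + u * u - v * v) - 2 * a * b * (x * y + u * v)"
   by (simp add: field_simps)
 have e: "(a * x - b * y) * (a * x - b * y) + (a * u - b * v) * (a * u - b * v) = (a * a + b * b) * ((x * x + y * y + u * u + v * v)/2)"
   using e0 assms(1,2) by simp
 have "a * a + b * b > 0" using assms(4)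
  by (metis not_sum_squares_lt_zero prod.inject sum_squares_gt_zero_iff)
 then show ?thesis unfolding e using assms(3) by simp
qed
lemma key_alg:
  fixes v v' S :: complex and lam :: real
  assumes e: "S * v = of_real (2*lam) * v'" and l: "lam > 0"
  shows "Re v' = Re S/(2*lam) * Re v + (Im S / (2*lam)) * Re (\<i> * v)"
    "Re (\<i> * v') = (- Im S)/(2*lam) * Re v + Re S/(2*lam) * Re (\<i> * v)"
    "Re (\<i> * (\<i> * v')) = - Re S/(2*lam) * Re v + (- Im S)/(2*lam) * Re (\<i> * v)"
proof -
  have r: "Re S * Re v - Im S * Im v = 2*lam * Re v'" using arg_cong[OF e, of Re] by simp
  have i: "Re S * Im v + Im S * Re v = 2*lam * Im v'" using arg_cong[OF e, of Im] by simp
  show "Re v' = Re S/(2*lam) * Re v + (Im S / (2*lam)) * Re (\<i> * v)"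
    using r l by (simp add: field_simps)
  show "Re (\<i> * v') = (- Im S)/(2*lam) * Re v + Re S/(2*lam) * Re (\<i> * v)"
    using i l by (simp add: field_simps)
  show "Re (\<i> * (\<i> * v')) = - Re S/(2*lam) * Re v + (- Im S)/(2*lam) * Re (\<i> * v)"
    using r l by (simp add: field_simps)
qed

lemma pd_normsq:
  assumes U: "open U" "w \<in> U" and A: "A holomorphic_on U" and B: "B holomorphic_on U"
  shows "pd k (\<lambda>z. (1/2) * (A z \<bullet> A z + B z \<bullet> B z)) w = A w \<bullet> (deriv A w * dir k) + B w \<bullet> (deriv B w * dir k)"
proof -
  have dA: "(A has_derivative (\<lambda>h. deriv A w * h)) (at w)"
    using holomorphic_derivI[OF A U(1,2), of UNIV] unfolding has_field_derivative_def by simp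
  have dB: "(B has_derivative (\<lambda>h. deriv B w * h)) (at w)"
    using holomorphic_derivI[OF B U(1,2), of UNIV] unfolding has_field_derivative_def by simp
  have "((\<lambda>z. (1/2) * (A z \<bullet> A z + B z \<bullet> B z)) has_derivative
     (\<lambda>h. (1/2) * ((A w \<bullet> (deriv A w * h) + (deriv A w * h) \<bullet> A w) + (B w \<bullet> (deriv B w * h) + (deriv B w * h) \<bullet> B w)))) (at w)"
    by (intro has_derivative_mult_right has_derivative_add has_derivative_inner dA dB)
  from pd_hasderiv[OF this, of k] show ?thesis by (simp add: inner_commute)
qed


lemma primitive0:
  assumes U: "open U" "simply_connected U" "w0 \<in> U" and H: "p holomorphic_on U"
  shows "\<exists>Q. (\<forall>z\<in>U. (Q has_field_derivative p z) (at z)) \<and> Q w0 = 0"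
proof -
  obtain G where G: "\<forall>z. z \<in> U \<longrightarrow> (G has_field_derivative p z) (at z)"
    using simply_connected_eq_global_primitive[OF U(1)] U(2) H by blast
  show ?thesis
    by (rule exI[of _ "\<lambda>z. G z - G w0"]) (use G in \<open>auto intro!: derivative_eq_intros\<close>)
qed

lemma contour_prim:
  assumes "\<forall>z\<in>U. (Q has_field_derivative p z) (at z)" "Q w0 = 0"
    "valid_path \<gamma>" "path_image \<gamma> \<subseteq> U" "pathstart \<gamma> = w0" "pathfinish \<gamma> = w"
  shows "(p has_contour_integral Q w) \<gamma>"
proof -
  have "(p has_contour_integral Q (pathfinish \<gamma>) - Q (pathstart \<gamma>)) \<gamma>"
    by (rule contour_integral_primitive[of U]) (use assms in \<open>auto intro: has_field_derivative_at_within\<close>)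
  then show ?thesis using assms by simp
qed


lemma part2_geom:
  fixes f :: "complex \<Rightarrow> real^3"
  assumes U: "open U"
   and Q: "\<forall>z\<in>U. (Q1 has_field_derivative p1 z) (at z)" "\<forall>z\<in>U. (Q2 has_field_derivative p2 z) (at z)"
          "\<forall>z\<in>U. (Q3 has_field_derivative p3 z) (at z)"
   and H: "p1 holomorphic_on U" "p2 holomorphic_on U" "p3 holomorphic_on U"
   and C: "\<forall>w\<in>U. (cmod (p1 w))\<^sup>2 + (cmod (p2 w))\<^sup>2 > 0 \<and> (p1 w)\<^sup>2 + (p2 w)\<^sup>2 = 0"
   and f: "f = (\<lambda>w. vector [Re (Q1 w), Re (Q2 w), Re (Q3 w)])"
  shows "nondeg_immersion U f \<and> d_minimal U f \<and> isothermal U f \<and>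
            (\<forall>w\<in>U. p1 w = phi f 1 w \<and> p2 w = phi f 2 w \<and> p3 w = phi f 3 w)"
proof -
  have QH: "Q1 holomorphic_on U" "Q2 holomorphic_on U" "Q3 holomorphic_on U"
    using Q U by (auto simp: holomorphic_on_open)
  have dQ: "deriv Q1 z = p1 z" "deriv Q2 z = p2 z" "deriv Q3 z = p3 z" if "z \<in> U" for z
    using Q that by (auto intro: DERIV_imp_deriv)
  have fU: "\<forall>z\<in>U. f z = vector [Re (Q1 z), Re (Q2 z), Re (Q3 z)]" using f by simp
  have pdf: "pd k f z = vector [Re (dir k * p1 z), Re (dir k * p2 z), Re (dir k * p3 z)]" if z: "z \<in> U" for k z
    using pd_vec(1)[OF U z fU QH, of k] dQ[OF z] by simp
  have fdiff: "\<forall>z\<in>U. f differentiable (at z)" using pd_vec(2)[OF U _ fU QH] by blast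
  have cH: "(\<lambda>z. c * p z) holomorphic_on U" if "p holomorphic_on U" for c p
    by (intro holomorphic_on_mult holomorphic_on_const that)
  have dcm: "deriv (\<lambda>z. c * p z) w = c * deriv p w" if "p holomorphic_on U" "w \<in> U" for c p w
    by (rule deriv_cmult) (use holomorphic_on_imp_differentiable_at[OF that(1) U that(2)] in simp)
  have pdff: "pd i (pd j f) w = vector [Re (dir i * (dir j * deriv p1 w)), Re (dir i * (dir j * deriv p2 w)),
        Re (dir i * (dir j * deriv p3 w))]" if w: "w \<in> U" for i j w
  proof -
    have "\<forall>z\<in>U. pd j f z = vector [Re ((\<lambda>z. dir j * p1 z) z), Re ((\<lambda>z. dir j * p2 z) z), Re ((\<lambda>z. dir j * p3 z) z)]"
      using pdf by simp
    from pd_vec(1)[OF U w this cH[OF H(1)] cH[OF H(2)] cH[OF H(3)], of i]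
    show ?thesis using dcm[OF H(1) w] dcm[OF H(2) w] dcm[OF H(3) w] by simp
  qed
  have rf: "Re (p1 z) * Re (p1 z) - Im (p1 z) * Im (p1 z) + Re (p2 z) * Re (p2 z) - Im (p2 z) * Im (p2 z) = 0"
     "Re (p1 z) * Im (p1 z) + Re (p2 z) * Im (p2 z) = 0"
     "Re (p1 z) * Re (p1 z) + Im (p1 z) * Im (p1 z) + Re (p2 z) * Re (p2 z) + Im (p2 z) * Im (p2 z) > 0"
     if z: "z \<in> U" for z
  proof -
    have e: "(p1 z)\<^sup>2 + (p2 z)\<^sup>2 = 0" and g: "(cmod (p1 z))\<^sup>2 + (cmod (p2 z))\<^sup>2 > 0" using C z by auto
    show "Re (p1 z) * Re (p1 z) - Im (p1 z) * Im (p1 z) + Re (p2 z) * Re (p2 z) - Im (p2 z) * Im (p2 z) = 0"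
      using arg_cong[OF e, of Re] by (simp add: power2_eq_square)
    show "Re (p1 z) * Im (p1 z) + Re (p2 z) * Im (p2 z) = 0"
      using arg_cong[OF e, of Im] by (simp add: power2_eq_square algebra_simps)
    show "Re (p1 z) * Re (p1 z) + Im (p1 z) * Im (p1 z) + Re (p2 z) * Re (p2 z) + Im (p2 z) * Im (p2 z) > 0"
      using g unfolding cmod_power2 by (simp add: power2_eq_square add.assoc)
  qed
  have gm: "gmet f i j z = Re (dir i * p1 z) * Re (dir j * p1 z) + Re (dir i * p2 z) * Re (dir j * p2 z)"
    if z: "z \<in> U" for i j z
    by (simp add: gmet_def dform_def pdf[OF z])
  have g00: "gmet f 0 0 z = Re (p1 z) * Re (p1 z) + Re (p2 z) * Re (p2 z)" if "z \<in> U" for z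
    using gm[OF that] by (simp add: dir_def)
  have g11: "gmet f 1 1 z = Im (p1 z) * Im (p1 z) + Im (p2 z) * Im (p2 z)" if "z \<in> U" for z
    using gm[OF that] by (simp add: dir_def)
  have g01: "gmet f 0 1 z = - (Re (p1 z) * Im (p1 z) + Re (p2 z) * Im (p2 z))" if "z \<in> U" for z
    using gm[OF that] by (simp add: dir_def)
  have iso: "isothermal U f"
    unfolding isothermal_def
  proof
    fix w assume w: "w \<in> U"
    show "gmet f 0 0 w = gmet f 1 1 w \<and> gmet f 0 1 w = 0"
      unfolding g00[OF w] g11[OF w] g01[OF w] using rf(1,2)[OF w] by argo
  qed
  have lampos: "gmet f 0 0 z > 0" if z: "z \<in> U" for z
    using g00[OF z] rf[OF z] by (simp add: algebra_simps)
  have nd: "\<forall>w\<in>U. \<forall>a b::real. (a, b) \<noteq> (0, 0) \<longrightarrow>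
        dform (a *\<^sub>R pd 0 f w + b *\<^sub>R pd 1 f w) (a *\<^sub>R pd 0 f w + b *\<^sub>R pd 1 f w) > 0"
  proof (intro ballI allI impI)
    fix w a b assume w: "w \<in> U" and ab: "(a::real, b::real) \<noteq> (0, 0)"
    have "dform (a *\<^sub>R pd 0 f w + b *\<^sub>R pd 1 f w) (a *\<^sub>R pd 0 f w + b *\<^sub>R pd 1 f w) =
      (a * Re (p1 w) - b * Im (p1 w)) * (a * Re (p1 w) - b * Im (p1 w)) +
      (a * Re (p2 w) - b * Im (p2 w)) * (a * Re (p2 w) - b * Im (p2 w))"
      by (simp add: dform_def pdf[OF w] dir_def)
    then show "dform (a *\<^sub>R pd 0 f w + b *\<^sub>R pd 1 f w) (a *\<^sub>R pd 0 f w + b *\<^sub>R pd 1 f w) > 0"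
      using alg_nondeg[OF rf[OF w] ab] by simp
  qed
  have imm2: "\<forall>w\<in>U. \<forall>a b::real. a *\<^sub>R pd 0 f w + b *\<^sub>R pd 1 f w = 0 \<longrightarrow> a = 0 \<and> b = 0"
  proof (intro ballI allI impI)
    fix w a b assume w: "w \<in> U" and z: "a *\<^sub>R pd 0 f w + b *\<^sub>R pd 1 f w = 0"
    show "a = 0 \<and> b = 0"
    proof (rule ccontr)
      assume "\<not> (a = 0 \<and> b = 0)"
      then have "(a, b) \<noteq> (0, 0)" by simp
      then have "dform (a *\<^sub>R pd 0 f w + b *\<^sub>R pd 1 f w) (a *\<^sub>R pd 0 f w + b *\<^sub>R pd 1 f w) > 0"
        using nd w by blast
      then show False unfolding z by (simp add: dform_def)
    qed
  qed
  have imm: "immersion U f"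
    unfolding immersion_def using smooth_vec[OF U fU QH] imm2 by blast
  have ph: "p1 w = phi f 1 w \<and> p2 w = phi f 2 w \<and> p3 w = phi f 3 w" if w: "w \<in> U" for w
    unfolding phi_def pd_comp_on[OF U fdiff w] pdf[OF w] by (simp add: dir_def complex_eq_iff)
  have geo: "pd i (pd j f) w $ c = christoffel f 0 i j w * (pd 0 f w $ c) + christoffel f 1 i j w * (pd 1 f w $ c)"
    if w: "w \<in> U" and ij: "i < 2" "j < 2" and c: "c = 1 \<or> c = 2" for i j c w
  proof -
    define a where "a = p1 w"
    define b where "b = p2 w"
    define a' where "a' = deriv p1 w"
    define b' where "b' = deriv p2 w"
    define lam where "lam = gmet f 0 0 w"
    have lp: "lam > 0" using lampos[OF w] lam_def by simp
    note CH = chris[OF U w iso lampos[OF w], folded lam_def]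
    have gU: "gmet f 0 0 z = (1/2) * (p1 z \<bullet> p1 z + p2 z \<bullet> p2 z)" if z: "z \<in> U" for z
      unfolding g00[OF z] inner_complex_def ring_distribs using rf(1)[OF z] by linarith
    have L: "pd k (gmet f 0 0) w = a \<bullet> (a' * dir k) + b \<bullet> (b' * dir k)" for k
    proof -
      have "pd k (gmet f 0 0) w = pd k (\<lambda>z. (1/2) * (p1 z \<bullet> p1 z + p2 z \<bullet> p2 z)) w"
        by (rule pd_cong[OF U w]) (rule gU)
      also have "\<dots> = a \<bullet> (a' * dir k) + b \<bullet> (b' * dir k)"
        unfolding a_def b_def a'_def b'_def by (rule pd_normsq[OF U w H(1,2)])
      finally show ?thesis .
    qed
    have E0: "a^2 + b^2 = 0" using C w by (simp add: a_def b_def)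
    have E: "a * a' + b * b' = 0"
    proof -
      let ?P = "\<lambda>z. (p1 z)^2 + (p2 z)^2"
      have d1: "(?P has_field_derivative (2 * p1 w * deriv p1 w + 2 * p2 w * deriv p2 w)) (at w)"
        by (auto intro!: derivative_eq_intros holomorphic_derivI[OF H(1) U w] holomorphic_derivI[OF H(2) U w])
      have d0: "(?P has_field_derivative 0) (at w)"
      proof (rule has_field_derivative_transform_within_open[OF _ U w])
        show "((\<lambda>z. 0) has_field_derivative 0) (at w)" by simp
        show "\<And>z. z \<in> U \<Longrightarrow> 0 = ?P z" using C by simp
      qed
      have "2 * (a * a') + 2 * (b * b') = 0"
        using DERIV_unique[OF d1 d0] by (simp add: a_def b_def a'_def b'_def algebra_simps)
      then have "2 * (a * a' + b * b') = 0" by (simp only: distrib_left)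
      then show ?thesis by (metis mult_eq_0_iff zero_neq_numeral)
    qed
    have bnz: "b \<noteq> 0"
    proof
      assume "b = 0"
      then have "a = 0" using E0 by simp
      then show False using C w \<open>b = 0\<close> by (auto simp: a_def b_def)
    qed
    have ab: "a * b' = a' * b"
    proof -
      have "b * (a * b' - a' * b) = a * (a * a' + b * b') - a' * (a^2 + b^2)"
        by (simp add: algebra_simps power2_eq_square)
      then have "b * (a * b' - a' * b) = 0" using E E0 by simp
      then show ?thesis using bnz by simp
    qed
    define S where "S = a' * cnj a + b' * cnj b"
    have lam2: "complex_of_real (2*lam) = a * cnj a + b * cnj b"
    proof -
      have "2 * lam = Re a * Re a + Im a * Im a + Re b * Re b + Im b * Im b"
        using g00[OF w] rf(1)[OF w] unfolding lam_def a_def b_def by linarith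
      then show ?thesis by (simp add: complex_eq_iff)
    qed
    have Sa: "S * a = complex_of_real (2*lam) * a'"
    proof -
      have "S * a - complex_of_real (2*lam) * a' = cnj b * (a * b' - a' * b)"
        unfolding lam2 S_def by (simp add: algebra_simps)
      then show ?thesis using ab by simp
    qed
    have Sb: "S * b = complex_of_real (2*lam) * b'"
    proof -
      have "S * b - complex_of_real (2*lam) * b' = cnj a * (a' * b - a * b')"
        unfolding lam2 S_def by (simp add: algebra_simps)
      then show ?thesis using ab by simp
    qed
    have L0: "pd 0 (gmet f 0 0) w = Re S"
      unfolding L S_def by (simp add: dir_def inner_complex_def algebra_simps)
    have L1: "pd 1 (gmet f 0 0) w = - Im S"
      unfolding L S_def by (simp add: dir_def inner_complex_def algebra_simps)
    obtain v v' where vk: "\<And>k. pd k f w $ c = Re (dir k * v)"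
      and vv: "\<And>i j. pd i (pd j f) w $ c = Re (dir i * (dir j * v'))"
      and Sv: "S * v = complex_of_real (2*lam) * v'"
    proof -
      show ?thesis
      proof (cases "c = 1")
        case True
        show ?thesis
          by (rule that[of a a']) (simp_all add: True pdf[OF w] pdff[OF w] a_def a'_def Sa[unfolded a_def a'_def])
      next
        case False
        then have c2: "c = 2" using c by simp
        show ?thesis
          by (rule that[of b b']) (simp_all add: c2 pdf[OF w] pdff[OF w] b_def b'_def Sb[unfolded b_def b'_def])
      qed
    qed
    note K = key_alg[OF Sv lp]
    have i01: "i = 0 \<or> i = 1" and j01: "j = 0 \<or> j = 1" using ij by auto
    show ?thesis
      unfolding vk vv
      using i01 j01 K CH(5-12) L0 L1
      by (auto simp: dir_def)
  qed
  define hh where "hh i j w = (pd i (pd j f) w - (\<Sum>k<2. christoffel f k i j w *\<^sub>R pd k f w)) $ 3" for i j w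
  have eqv: "pd i (pd j f) w = (\<Sum>k<2. christoffel f k i j w *\<^sub>R pd k f w) + hh i j w *\<^sub>R xi"
    if w: "w \<in> U" and ij: "i < 2" "j < 2" for i j w
  proof -
    have "(pd i (pd j f) w) $ c = ((\<Sum>k<2. christoffel f k i j w *\<^sub>R pd k f w) + hh i j w *\<^sub>R xi) $ c" for c
    proof -
      have "c = 1 \<or> c = 2 \<or> c = 3" using exhaust_3 by blast
      then show ?thesis
        using geo[OF w ij, of c] by (auto simp: hh_def xi_def axis_def sum2)
    qed
    then show ?thesis by (simp add: vec_eq_iff)
  qed
  have tr: "(\<Sum>i<2. \<Sum>j<2. ginv f i j w * hh i j w) = 0" if w: "w \<in> U" for w
  proof -
    note CH = chris[OF U w iso lampos[OF w]]
    have "hh 0 0 w + hh 1 1 w = 0"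
      unfolding hh_def sum2 using CH(5-8) by (simp add: pdff[OF w] dir_def algebra_simps)
    then show ?thesis unfolding sum2 using CH(1-4) by (simp flip: add_divide_distrib)
  qed
  have dm: "d_minimal U f"
    unfolding d_minimal_def using eqv tr by blast
  show ?thesis using nd imm dm iso ph unfolding nondeg_immersion_def by blast
qed

theorem theorem4p2p1:
  shows
  "(\<forall>(U::complex set) (f::complex \<Rightarrow> real^3).
      open U \<and> nondeg_immersion U f \<and> d_minimal U f \<and> isothermal U f \<longrightarrow>
        phi f 1 holomorphic_on U \<and> phi f 2 holomorphic_on U \<and> phi f 3 holomorphic_on U \<and>
        (\<forall>w\<in>U. (cmod (phi f 1 w))\<^sup>2 + (cmod (phi f 2 w))\<^sup>2 > 0 \<and>
                (phi f 1 w)\<^sup>2 + (phi f 2 w)\<^sup>2 = 0) \<and>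
        (\<forall>w\<in>U. dform (pd 0 f w) (pd 0 f w) = dform (pd 1 f w) (pd 1 f w) \<and>
                dform (pd 0 f w) (pd 0 f w) = ((cmod (phi f 1 w))\<^sup>2 + (cmod (phi f 2 w))\<^sup>2) / 2))
   \<and>
   (\<forall>(U::complex set) (\<phi>1::complex \<Rightarrow> complex) \<phi>2 \<phi>3 w0.
      open U \<and> connected U \<and> simply_connected U \<and> w0 \<in> U \<and>
      \<phi>1 holomorphic_on U \<and> \<phi>2 holomorphic_on U \<and> \<phi>3 holomorphic_on U \<and>
      (\<forall>w\<in>U. (cmod (\<phi>1 w))\<^sup>2 + (cmod (\<phi>2 w))\<^sup>2 > 0 \<and> (\<phi>1 w)\<^sup>2 + (\<phi>2 w)\<^sup>2 = 0) \<longrightarrow>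
      (\<exists>\<Phi>1 \<Phi>2 \<Phi>3 :: complex \<Rightarrow> complex.
         (\<forall>w\<in>U. \<forall>\<gamma>. valid_path \<gamma> \<and> path_image \<gamma> \<subseteq> U \<and>
              pathstart \<gamma> = w0 \<and> pathfinish \<gamma> = w \<longrightarrow>
              (\<phi>1 has_contour_integral \<Phi>1 w) \<gamma> \<and>
              (\<phi>2 has_contour_integral \<Phi>2 w) \<gamma> \<and>
              (\<phi>3 has_contour_integral \<Phi>3 w) \<gamma>) \<and>
         (let f = (\<lambda>w. vector [Re (\<Phi>1 w), Re (\<Phi>2 w), Re (\<Phi>3 w)] :: real^3) in
            nondeg_immersion U f \<and> d_minimal U f \<and> isothermal U f \<and>
            (\<forall>w\<in>U. \<phi>1 w = phi f 1 w \<and> \<phi>2 w = phi f 2 w \<and> \<phi>3 w = phi f 3 w))))"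
proof (rule conjI)
  show "\<forall>(U::complex set) (f::complex \<Rightarrow> real^3).
      open U \<and> nondeg_immersion U f \<and> d_minimal U f \<and> isothermal U f \<longrightarrow>
        phi f 1 holomorphic_on U \<and> phi f 2 holomorphic_on U \<and> phi f 3 holomorphic_on U \<and>
        (\<forall>w\<in>U. (cmod (phi f 1 w))\<^sup>2 + (cmod (phi f 2 w))\<^sup>2 > 0 \<and>
                (phi f 1 w)\<^sup>2 + (phi f 2 w)\<^sup>2 = 0) \<and>
        (\<forall>w\<in>U. dform (pd 0 f w) (pd 0 f w) = dform (pd 1 f w) (pd 1 f w) \<and>
                dform (pd 0 f w) (pd 0 f w) = ((cmod (phi f 1 w))\<^sup>2 + (cmod (phi f 2 w))\<^sup>2) / 2)"
    using part1 by blast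
next
  show "\<forall>(U::complex set) (\<phi>1::complex \<Rightarrow> complex) \<phi>2 \<phi>3 w0.
      open U \<and> connected U \<and> simply_connected U \<and> w0 \<in> U \<and>
      \<phi>1 holomorphic_on U \<and> \<phi>2 holomorphic_on U \<and> \<phi>3 holomorphic_on U \<and>
      (\<forall>w\<in>U. (cmod (\<phi>1 w))\<^sup>2 + (cmod (\<phi>2 w))\<^sup>2 > 0 \<and> (\<phi>1 w)\<^sup>2 + (\<phi>2 w)\<^sup>2 = 0) \<longrightarrow>
      (\<exists>\<Phi>1 \<Phi>2 \<Phi>3 :: complex \<Rightarrow> complex.
         (\<forall>w\<in>U. \<forall>\<gamma>. valid_path \<gamma> \<and> path_image \<gamma> \<subseteq> U \<and>
              pathstart \<gamma> = w0 \<and> pathfinish \<gamma> = w \<longrightarrow>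
              (\<phi>1 has_contour_integral \<Phi>1 w) \<gamma> \<and>
              (\<phi>2 has_contour_integral \<Phi>2 w) \<gamma> \<and>
              (\<phi>3 has_contour_integral \<Phi>3 w) \<gamma>) \<and>
         (let f = (\<lambda>w. vector [Re (\<Phi>1 w), Re (\<Phi>2 w), Re (\<Phi>3 w)] :: real^3) in
            nondeg_immersion U f \<and> d_minimal U f \<and> isothermal U f \<and>
            (\<forall>w\<in>U. \<phi>1 w = phi f 1 w \<and> \<phi>2 w = phi f 2 w \<and> \<phi>3 w = phi f 3 w)))"
  proof (intro allI impI)
    fix U :: "complex set" and p1 p2 p3 :: "complex \<Rightarrow> complex" and w0
    assume A: "open U \<and> connected U \<and> simply_connected U \<and> w0 \<in> U \<and>
      p1 holomorphic_on U \<and> p2 holomorphic_on U \<and> p3 holomorphic_on U \<and>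
      (\<forall>w\<in>U. (cmod (p1 w))\<^sup>2 + (cmod (p2 w))\<^sup>2 > 0 \<and> (p1 w)\<^sup>2 + (p2 w)\<^sup>2 = 0)"
    then have U: "open U" "simply_connected U" "w0 \<in> U" and H: "p1 holomorphic_on U" "p2 holomorphic_on U" "p3 holomorphic_on U"
      and C: "\<forall>w\<in>U. (cmod (p1 w))\<^sup>2 + (cmod (p2 w))\<^sup>2 > 0 \<and> (p1 w)\<^sup>2 + (p2 w)\<^sup>2 = 0" by auto
    obtain Q1 where Q1: "\<forall>z\<in>U. (Q1 has_field_derivative p1 z) (at z)" "Q1 w0 = 0"
      using primitive0[OF U H(1)] by blast
    obtain Q2 where Q2: "\<forall>z\<in>U. (Q2 has_field_derivative p2 z) (at z)" "Q2 w0 = 0"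
      using primitive0[OF U H(2)] by blast
    obtain Q3 where Q3: "\<forall>z\<in>U. (Q3 has_field_derivative p3 z) (at z)" "Q3 w0 = 0"
      using primitive0[OF U H(3)] by blast
    have ci: "\<forall>w\<in>U. \<forall>\<gamma>. valid_path \<gamma> \<and> path_image \<gamma> \<subseteq> U \<and>
              pathstart \<gamma> = w0 \<and> pathfinish \<gamma> = w \<longrightarrow>
              (p1 has_contour_integral Q1 w) \<gamma> \<and>
              (p2 has_contour_integral Q2 w) \<gamma> \<and>
              (p3 has_contour_integral Q3 w) \<gamma>"
      using contour_prim[OF Q1] contour_prim[OF Q2] contour_prim[OF Q3] by blast
    have g: "nondeg_immersion U (\<lambda>w. vector [Re (Q1 w), Re (Q2 w), Re (Q3 w)] :: real^3) \<and>
        d_minimal U (\<lambda>w. vector [Re (Q1 w), Re (Q2 w), Re (Q3 w)] :: real^3) \<and>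
        isothermal U (\<lambda>w. vector [Re (Q1 w), Re (Q2 w), Re (Q3 w)] :: real^3) \<and>
        (\<forall>w\<in>U. p1 w = phi (\<lambda>w. vector [Re (Q1 w), Re (Q2 w), Re (Q3 w)] :: real^3) 1 w \<and>
                p2 w = phi (\<lambda>w. vector [Re (Q1 w), Re (Q2 w), Re (Q3 w)] :: real^3) 2 w \<and>
                p3 w = phi (\<lambda>w. vector [Re (Q1 w), Re (Q2 w), Re (Q3 w)] :: real^3) 3 w)"
      by (rule part2_geom[OF U(1) Q1(1) Q2(1) Q3(1) H C refl])
    show "\<exists>\<Phi>1 \<Phi>2 \<Phi>3 :: complex \<Rightarrow> complex.
         (\<forall>w\<in>U. \<forall>\<gamma>. valid_path \<gamma> \<and> path_image \<gamma> \<subseteq> U \<and>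
              pathstart \<gamma> = w0 \<and> pathfinish \<gamma> = w \<longrightarrow>
              (p1 has_contour_integral \<Phi>1 w) \<gamma> \<and>
              (p2 has_contour_integral \<Phi>2 w) \<gamma> \<and>
              (p3 has_contour_integral \<Phi>3 w) \<gamma>) \<and>
         (let f = (\<lambda>w. vector [Re (\<Phi>1 w), Re (\<Phi>2 w), Re (\<Phi>3 w)] :: real^3) in
            nondeg_immersion U f \<and> d_minimal U f \<and> isothermal U f \<and>
            (\<forall>w\<in>U. p1 w = phi f 1 w \<and> p2 w = phi f 2 w \<and> p3 w = phi f 3 w))"
      by (rule exI[of _ Q1], rule exI[of _ Q2], rule exI[of _ Q3]) (insert ci g, simp only: Let_def, blast)
  qed
qed

end
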